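(* Let $z$ lie in the upper half-plane and let $E_4,\Delta_{24}$ and $h_n$ be as in the context. Then for every positive integer $n$, $$h_n(z)=2E_4(z)^n+\sum_{i=1}^{\lfloor n/3\rfloor}\frac{n}{i}\binom{n-i-1}{2i-1}2^{8i}\Delta_{24}(z)^iE_4(z)^{n-3i}.$$
   Context: For $z$ with $\mathrm{Im}(z)>0$ put $q=e^{\pi\sqrt{-1}z}$ and define $\vartheta_2(z)=\sum_{m\in\mathbb{Z}}q^{(m+1/2)^2}$, $\vartheta_3(z)=\sum_{m\in\mathbb{Z}}q^{m^2}$, $\vartheta_4(z)=\sum_{m\in\mathbb{Z}}(-q)^{m^2}$. Define $E_4(z)=\frac12(\vartheta_2(z)^8+\vartheta_3(z)^8+\vartheta_4(z)^8)$, $\Delta_{24}(z)=\left(\frac{\vartheta_2(z)\vartheta_3(z)\vartheta_4(z)}{2}\right)^8$, and for a nonnegative integer $n$, $h_n(z)=\vartheta_2(z)^{8n}+\vartheta_3(z)^{8n}+\vartheta_4(z)^{8n}$. *)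

theory Defs
  imports "HOL-Complex_Analysis.Complex_Analysis"
begin

text \<open>Jacobi theta functions, with q = exp(pi i z); q^r is read as exp(pi i z r).\<close>

definition theta2 :: "complex \<Rightarrow> complex" where
  "theta2 z = (\<Sum>\<^sub>\<infinity>m::int. exp (pi * \<i> * z * (of_int m + 1/2)^2))"

definition theta3 :: "complex \<Rightarrow> complex" where
  "theta3 z = (\<Sum>\<^sub>\<infinity>m::int. exp (pi * \<i> * z) ^ nat (m^2))"

definition theta4 :: "complex \<Rightarrow> complex" where
  "theta4 z = (\<Sum>\<^sub>\<infinity>m::int. (- exp (pi * \<i> * z)) ^ nat (m^2))"

definition E4 :: "complex \<Rightarrow> complex" where
  "E4 z = (theta2 z ^ 8 + theta3 z ^ 8 + theta4 z ^ 8) / 2"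

definition Delta24 :: "complex \<Rightarrow> complex" where
  "Delta24 z = (theta2 z * theta3 z * theta4 z / 2) ^ 8"

definition h :: "nat \<Rightarrow> complex \<Rightarrow> complex" where
  "h n z = theta2 z ^ (8*n) + theta3 z ^ (8*n) + theta4 z ^ (8*n)"

end

theory Submission
  imports Defs
begin


definition ee :: "complex \<Rightarrow> complex \<Rightarrow> complex" where
  "ee z t = exp (pi * \<i> * z * t)"

lemma ee_mult: "ee z x * ee z y = ee z (x + y)"
  unfolding ee_def by (simp add: exp_add[symmetric] algebra_simps)

lemma norm_ee: "norm (ee z (of_real r)) = exp (- pi * Im z * r)"
  unfolding ee_def by (simp add: norm_exp_eq_Re)

lemma geo_int:
  fixes \<rho> :: real
  assumes "0 \<le> \<rho>" "\<rho> < 1"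
  shows "(\<lambda>m::int. \<rho> ^ nat \<bar>m\<bar>) summable_on UNIV"
proof -
  have g: "(\<lambda>n::nat. \<rho> ^ n) summable_on UNIV"
    by (rule norm_summable_imp_summable_on) (use assms in \<open>simp add: summable_geometric\<close>)
  have g2: "(\<lambda>n::nat. \<rho> * \<rho> ^ n) summable_on UNIV"
    using g by (rule summable_on_cmult_right)
  have a: "(\<lambda>m::int. \<rho> ^ nat \<bar>m\<bar>) summable_on (int ` UNIV)"
    by (subst summable_on_reindex) (auto simp: o_def g inj_on_def)
  have b: "(\<lambda>m::int. \<rho> ^ nat \<bar>m\<bar>) summable_on ((\<lambda>n. - int (Suc n)) ` UNIV)"
    by (subst summable_on_reindex) (auto simp: o_def g2 inj_on_def nat_add_distrib)
  have U: "int ` UNIV \<union> (\<lambda>n. - int (Suc n)) ` UNIV = UNIV"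
  proof -
    have "m \<in> int ` UNIV \<union> (\<lambda>n. - int (Suc n)) ` UNIV" for m
    proof (cases "m \<ge> 0")
      case True then show ?thesis by (auto intro!: image_eqI[of _ _ "nat m"])
    next
      case False then show ?thesis
        by (intro UnI2 image_eqI[of _ _ "nat (- m - 1)"]) auto
    qed
    then show ?thesis by blast
  qed
  show ?thesis using summable_on_union[OF a b] U by simp
qed

lemma ee_summable:
  fixes r :: "int \<Rightarrow> real" and s :: "int \<Rightarrow> complex"
  assumes z: "Im z > 0" and r: "\<And>m. r m \<ge> \<bar>real_of_int m\<bar> - 1" and s: "\<And>m. norm (s m) \<le> 1"
  shows "(\<lambda>m. s m * ee z (of_real (r m))) summable_on UNIV"
proof -
  define t where "t = pi * Im z"
  have t: "t > 0" using z by (simp add: t_def)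
  define \<rho> where "\<rho> = exp (- t)"
  have \<rho>: "0 \<le> \<rho>" "\<rho> < 1" using t by (auto simp: \<rho>_def)
  have G: "(\<lambda>m::int. exp t * \<rho> ^ nat \<bar>m\<bar>) summable_on UNIV"
    by (rule summable_on_cmult_right[OF geo_int[OF \<rho>]])
  have bnd: "norm (s m * ee z (of_real (r m))) \<le> norm (exp t * \<rho> ^ nat \<bar>m\<bar>)" for m
  proof -
    have "norm (s m * ee z (of_real (r m))) \<le> exp (- t * r m)"
      using s[of m] by (simp add: norm_mult norm_ee t_def mult_left_le_one_le)
    also have "\<dots> \<le> exp (- t * (\<bar>real_of_int m\<bar> - 1))"
      using r[of m] t by simp
    also have "\<dots> = exp t * \<rho> ^ nat \<bar>m\<bar>"
      by (simp add: \<rho>_def exp_of_nat_mult[symmetric] exp_add[symmetric] algebra_simps)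
    finally show ?thesis by simp
  qed
  have "(\<lambda>m. norm (s m * ee z (of_real (r m)))) summable_on UNIV"
    by (rule Infinite_Sum.abs_summable_on_comparison_test[OF _ bnd]) (use G \<rho> in \<open>simp add: abs_of_nonneg\<close>)
  then show ?thesis by (rule abs_summable_summable)
qed

lemma prod_infsum:
  fixes f g :: "int \<Rightarrow> complex"
  assumes f: "f summable_on UNIV" and g: "g summable_on UNIV"
  shows "(\<lambda>(m,n). f m * g n) summable_on UNIV"
    and "infsum (\<lambda>(m,n). f m * g n) UNIV = infsum f UNIV * infsum g UNIV"
proof -
  have f': "Infinite_Set_Sum.abs_summable_on f UNIV"
    using f by (simp add: summable_on_iff_abs_summable_on_complex abs_summable_equivalent)
  have g': "Infinite_Set_Sum.abs_summable_on g UNIV"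
    using g by (simp add: summable_on_iff_abs_summable_on_complex abs_summable_equivalent)
  have P: "Infinite_Set_Sum.abs_summable_on (\<lambda>(m,n). f m * g n) (UNIV \<times> UNIV)"
    by (rule abs_summable_on_product[OF _ _ f' g']) auto
  have E: "infsetsum (\<lambda>(m,n). f m * g n) (UNIV \<times> UNIV) = infsetsum f UNIV * infsetsum g UNIV"
    by (rule infsetsum_product[OF _ _ f' g']) auto
  show "(\<lambda>(m,n). f m * g n) summable_on UNIV"
    using P by (simp add: summable_on_iff_abs_summable_on_complex abs_summable_equivalent)
  show "infsum (\<lambda>(m,n). f m * g n) UNIV = infsum f UNIV * infsum g UNIV"
    using E P f' g' by (simp add: infsetsum_infsum)
qed

lemma split2:
  fixes F :: "int \<times> int \<Rightarrow> complex"
  assumes F: "F summable_on UNIV" and i1: "inj g1" and i2: "inj g2"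
    and d: "range g1 \<inter> range g2 = {}" and u: "range g1 \<union> range g2 = UNIV"
  shows "infsum F UNIV = infsum (F \<circ> g1) UNIV + infsum (F \<circ> g2) UNIV"
proof -
  have "infsum F UNIV = infsum F (range g1 \<union> range g2)" using u by simp
  also have "\<dots> = infsum F (range g1) + infsum F (range g2)"
    by (rule infsum_Un_disjoint[OF summable_on_subset[OF F] summable_on_subset[OF F] d]) auto
  also have "\<dots> = infsum (F \<circ> g1) UNIV + infsum (F \<circ> g2) UNIV"
    using i1 i2 by (simp add: infsum_reindex)
  finally show ?thesis .
qed

lemma sq_bounds:
  fixes x :: real
  shows "x^2 \<ge> \<bar>x\<bar> - 1" "(x+1/2)^2 \<ge> \<bar>x\<bar> - 1" "2*x^2 \<ge> \<bar>x\<bar> - 1" "2*(x+1/2)^2 \<ge> \<bar>x\<bar> - 1"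
proof -
  have h: "0 \<le> (x - 1/2)^2" "0 \<le> (x + 1/2)^2" "0 \<le> x^2" "0 \<le> (x+1)^2" "0 \<le> (x - 1)^2" by simp_all
  show "x^2 \<ge> \<bar>x\<bar> - 1" "(x+1/2)^2 \<ge> \<bar>x\<bar> - 1" "2*x^2 \<ge> \<bar>x\<bar> - 1" "2*(x+1/2)^2 \<ge> \<bar>x\<bar> - 1"
    using h by (auto simp: abs_if power2_eq_square algebra_simps)
qed

lemma g1_facts:
  "inj (\<lambda>(a::int,b). (a+b, a-b))" "inj (\<lambda>(a::int,b). (a+b+1, b-a))" "inj (\<lambda>(a::int,b). (a+b, b-a-1))"
  "range (\<lambda>(a::int,b). (a+b, a-b)) \<inter> range (\<lambda>(a::int,b). (a+b+1, b-a)) = {}"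
  "range (\<lambda>(a::int,b). (a+b, a-b)) \<inter> range (\<lambda>(a::int,b). (a+b, b-a-1)) = {}"
  "range (\<lambda>(a::int,b). (a+b, a-b)) \<union> range (\<lambda>(a::int,b). (a+b+1, b-a)) = UNIV"
  "range (\<lambda>(a::int,b). (a+b, a-b)) \<union> range (\<lambda>(a::int,b). (a+b, b-a-1)) = UNIV"
proof -
  show "inj (\<lambda>(a::int,b). (a+b, a-b))" "inj (\<lambda>(a::int,b). (a+b+1, b-a))" "inj (\<lambda>(a::int,b). (a+b, b-a-1))"
    by (auto simp: inj_on_def)
  show "range (\<lambda>(a::int,b). (a+b, a-b)) \<inter> range (\<lambda>(a::int,b). (a+b+1, b-a)) = {}"
    by auto presburger
  show "range (\<lambda>(a::int,b). (a+b, a-b)) \<inter> range (\<lambda>(a::int,b). (a+b, b-a-1)) = {}"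
    by auto presburger
  have c1: "p \<in> range (\<lambda>(a::int,b). (a+b, a-b)) \<union> range (\<lambda>(a::int,b). (a+b+1, b-a))" for p
  proof -
    obtain m n where p: "p = (m,n)" by (cases p)
    show ?thesis
    proof (cases "even (m+n)")
      case True
      then obtain k where k: "m + n = 2*k" using True by (meson evenE)
      show ?thesis by (rule UnI1, rule image_eqI[of _ _ "(k, m-k)"]) (use k p in auto)
    next
      case False
      then obtain k where k: "m + n = 2*k+1" using False by (meson oddE)
      show ?thesis by (rule UnI2, rule image_eqI[of _ _ "(m-1-k, k)"]) (use k p in auto)
    qed
  qed
  then show "range (\<lambda>(a::int,b). (a+b, a-b)) \<union> range (\<lambda>(a::int,b). (a+b+1, b-a)) = UNIV"
    by blast
  have c2: "p \<in> range (\<lambda>(a::int,b). (a+b, a-b)) \<union> range (\<lambda>(a::int,b). (a+b, b-a-1))" for p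
  proof -
    obtain m n where p: "p = (m,n)" by (cases p)
    show ?thesis
    proof (cases "even (m+n)")
      case True
      then obtain k where k: "m + n = 2*k" using True by (meson evenE)
      show ?thesis by (rule UnI1, rule image_eqI[of _ _ "(k, m-k)"]) (use k p in auto)
    next
      case False
      then obtain k where k: "m + n = 2*k+1" using False by (meson oddE)
      show ?thesis by (rule UnI2, rule image_eqI[of _ _ "(m-k-1, k+1)"]) (use k p in auto)
    qed
  qed
  then show "range (\<lambda>(a::int,b). (a+b, a-b)) \<union> range (\<lambda>(a::int,b). (a+b, b-a-1)) = UNIV"
    by blast
qed


lemma ee_nat: "ee z (of_nat k) = exp (pi * \<i> * z) ^ k"
proof -
  have "ee z (of_nat k) = exp (of_nat k * (pi * \<i> * z))" unfolding ee_def by (rule arg_cong[where f=exp], rule mult.commute)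
  also have "\<dots> = exp (pi * \<i> * z) ^ k" by (rule exp_of_nat_mult)
  finally show ?thesis .
qed

lemma ee_sq: "exp (pi * \<i> * z) ^ nat (m^2) = ee z (of_int (m^2))"
proof -
  have h: "(of_nat (nat (m^2))::complex) = of_int (m^2)" by (rule of_nat_nat) simp
  show ?thesis using ee_nat[of z "nat (m^2)"] unfolding h by (rule sym)
qed

lemma T3: "theta3 z = (\<Sum>\<^sub>\<infinity>m::int. ee z (of_int (m^2)))"
  unfolding theta3_def ee_sq ..

lemma T4: "theta4 z = (\<Sum>\<^sub>\<infinity>m::int. (-1)^nat (m^2) * ee z (of_int (m^2)))"
  unfolding theta4_def power_minus[of "exp (pi * \<i> * z)"] ee_sq ..

lemma T2: "theta2 z = (\<Sum>\<^sub>\<infinity>m::int. ee z ((of_int m + 1/2)^2))"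
  unfolding theta2_def ee_def by (intro infsum_cong) (simp add: mult.assoc)

context
  fixes z :: complex
  assumes z: "Im z > 0"
begin

lemma summ_gen:
  assumes "\<And>m. r m \<ge> \<bar>real_of_int m\<bar> - 1" "\<And>m. norm (s m) \<le> 1" "\<And>m. c m = of_real (r m)"
  shows "(\<lambda>m. s m * ee z (c m)) summable_on UNIV"
  using ee_summable[OF z assms(1,2)] assms(3) by simp

lemma s3: "(\<lambda>m::int. ee z (of_int (m^2))) summable_on UNIV"
  using summ_gen[of "\<lambda>m. (of_int m)^2" "\<lambda>_. 1" "\<lambda>m. of_int (m^2)"] sq_bounds(1) by simp

lemma s4: "(\<lambda>m::int. (-1)^nat (m^2) * ee z (of_int (m^2))) summable_on UNIV"
  using summ_gen[of "\<lambda>m. (of_int m)^2" "\<lambda>m. (-1)^nat (m^2)" "\<lambda>m. of_int (m^2)"] sq_bounds(1)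
  by (simp add: norm_power)

lemma s2: "(\<lambda>m::int. ee z ((of_int m + 1/2)^2)) summable_on UNIV"
  using summ_gen[of "\<lambda>m. (of_int m + 1/2)^2" "\<lambda>_. 1" "\<lambda>m. (of_int m + 1/2)^2"] sq_bounds(2) by simp

lemma sp: "(\<lambda>m::int. ee z (2 * (of_int m)^2)) summable_on UNIV"
  using summ_gen[of "\<lambda>m. 2 * (of_int m)^2" "\<lambda>_. 1" "\<lambda>m. 2 * (of_int m)^2"] sq_bounds(3) by simp

lemma sq: "(\<lambda>m::int. ee z (2 * (of_int m + 1/2)^2)) summable_on UNIV"
  using summ_gen[of "\<lambda>m. 2 * (of_int m + 1/2)^2" "\<lambda>_. 1" "\<lambda>m. 2 * (of_int m + 1/2)^2"] sq_bounds(4) by simp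


lemma ee_pair: "x1 + x2 = y1 + y2 \<Longrightarrow> ee z x1 * ee z x2 = ee z y1 * ee z y2"
  by (simp add: ee_mult)

lemma neg1_nat: "0 \<le> k \<Longrightarrow> (-1::complex) ^ nat k = (if even k then 1 else -1)"
  by (simp add: even_nat_iff)

lemma sgn_pair: "(-1::complex) ^ nat (x^2) * (-1) ^ nat (y^2) = (-1) ^ nat (x^2 + y^2)"
  by (simp add: power_add[symmetric] nat_add_distrib)

lemma th3sq: "theta3 z ^ 2 = (\<Sum>\<^sub>\<infinity>m::int. ee z (2 * (of_int m)^2))^2 + (\<Sum>\<^sub>\<infinity>m::int. ee z (2 * (of_int m + 1/2)^2))^2"
proof -
  define t where "t = (\<lambda>m::int. ee z (of_int (m^2)))"
  define p where "p = (\<lambda>m::int. ee z (2 * (of_int m)^2))"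
  define q where "q = (\<lambda>m::int. ee z (2 * (of_int m + 1/2)^2))"
  define F where "F = (\<lambda>(m,n). t m * t n)"
  have st: "t summable_on UNIV" unfolding t_def by (rule s3)
  have F: "F summable_on UNIV" unfolding F_def by (rule prod_infsum(1)[OF st st])
  have "theta3 z ^ 2 = infsum F UNIV"
    unfolding T3 F_def t_def[symmetric] power2_eq_square[of "infsum t UNIV"] by (rule prod_infsum(2)[OF st st, symmetric])
  also have "\<dots> = infsum (F \<circ> (\<lambda>(a,b). (a+b, a-b))) UNIV + infsum (F \<circ> (\<lambda>(a,b). (a+b+1, b-a))) UNIV"
    by (rule split2[OF F g1_facts(1) g1_facts(2) g1_facts(4) g1_facts(6)])
  also have "F \<circ> (\<lambda>(a,b). (a+b, a-b)) = (\<lambda>(a,b). p a * p b)"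
  proof (rule ext, clarify)
    fix a b :: int
    show "(F \<circ> (\<lambda>(a,b). (a+b, a-b))) (a,b) = p a * p b"
      unfolding F_def t_def p_def o_def split
      by (rule ee_pair) (simp add: power2_eq_square algebra_simps)
  qed
  also have "F \<circ> (\<lambda>(a,b). (a+b+1, b-a)) = (\<lambda>(a,b). q a * q b)"
  proof (rule ext, clarify)
    fix a b :: int
    show "(F \<circ> (\<lambda>(a,b). (a+b+1, b-a))) (a,b) = q a * q b"
      unfolding F_def t_def q_def o_def split
      by (rule ee_pair) (simp add: power2_eq_square algebra_simps)
  qed
  also have "infsum (\<lambda>(a,b). p a * p b) UNIV = infsum p UNIV ^ 2"
    unfolding power2_eq_square by (rule prod_infsum(2)) (simp_all add: p_def sp)
  also have "infsum (\<lambda>(a,b). q a * q b) UNIV = infsum q UNIV ^ 2"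
    unfolding power2_eq_square by (rule prod_infsum(2)) (simp_all add: q_def sq)
  finally show ?thesis unfolding p_def q_def .
qed

lemma th4sq: "theta4 z ^ 2 = (\<Sum>\<^sub>\<infinity>m::int. ee z (2 * (of_int m)^2))^2 - (\<Sum>\<^sub>\<infinity>m::int. ee z (2 * (of_int m + 1/2)^2))^2"
proof -
  define t where "t = (\<lambda>m::int. (-1)^nat (m^2) * ee z (of_int (m^2)))"
  define p where "p = (\<lambda>m::int. ee z (2 * (of_int m)^2))"
  define q where "q = (\<lambda>m::int. ee z (2 * (of_int m + 1/2)^2))"
  define F where "F = (\<lambda>(m,n). t m * t n)"
  have st: "t summable_on UNIV" unfolding t_def by (rule s4)
  have F: "F summable_on UNIV" unfolding F_def by (rule prod_infsum(1)[OF st st])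
  have "theta4 z ^ 2 = infsum F UNIV"
    unfolding T4 F_def t_def[symmetric] power2_eq_square[of "infsum t UNIV"] by (rule prod_infsum(2)[OF st st, symmetric])
  also have "\<dots> = infsum (F \<circ> (\<lambda>(a,b). (a+b, a-b))) UNIV + infsum (F \<circ> (\<lambda>(a,b). (a+b+1, b-a))) UNIV"
    by (rule split2[OF F g1_facts(1) g1_facts(2) g1_facts(4) g1_facts(6)])
  also have "F \<circ> (\<lambda>(a,b). (a+b, a-b)) = (\<lambda>(a,b). p a * p b)"
  proof (rule ext, clarify)
    fix a b :: int
    have e: "(a+b)^2 + (a-b)^2 = 2 * (a^2 + b^2)" by (simp add: power2_eq_square algebra_simps)
    have sg: "(-1::complex) ^ nat ((a+b)^2) * (-1) ^ nat ((a-b)^2) = 1"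
      unfolding sgn_pair e by (subst neg1_nat) simp_all
    have "(F \<circ> (\<lambda>(a,b). (a+b, a-b))) (a,b) = ((-1::complex) ^ nat ((a+b)^2) * (-1) ^ nat ((a-b)^2)) * (ee z (of_int ((a+b)^2)) * ee z (of_int ((a-b)^2)))"
      unfolding F_def t_def o_def split by (simp only: ac_simps)
    also have "\<dots> = p a * p b"
      unfolding sg p_def
      by (simp only: mult_1_left, rule ee_pair) (simp add: power2_eq_square algebra_simps)
    finally show "(F \<circ> (\<lambda>(a,b). (a+b, a-b))) (a,b) = p a * p b" .
  qed
  also have "F \<circ> (\<lambda>(a,b). (a+b+1, b-a)) = (\<lambda>(a,b). - (q a * q b))"
  proof (rule ext, clarify)
    fix a b :: int
    have e: "(a+b+1)^2 + (b-a)^2 = 2 * (a^2 + a + b^2 + b) + 1" by (simp add: power2_eq_square algebra_simps)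
    have nn: "0 \<le> 2 * (a^2 + a + b^2 + b) + 1" unfolding e[symmetric] by simp
    have sg: "(-1::complex) ^ nat ((a+b+1)^2) * (-1) ^ nat ((b-a)^2) = -1"
      unfolding sgn_pair e by (subst neg1_nat[OF nn]) simp
    have "(F \<circ> (\<lambda>(a,b). (a+b+1, b-a))) (a,b) = ((-1::complex) ^ nat ((a+b+1)^2) * (-1) ^ nat ((b-a)^2)) * (ee z (of_int ((a+b+1)^2)) * ee z (of_int ((b-a)^2)))"
      unfolding F_def t_def o_def split by (simp only: ac_simps)
    also have "\<dots> = - (q a * q b)"
      unfolding sg q_def
      by (simp only: mult_minus1, rule arg_cong[where f=uminus], rule ee_pair) (simp add: power2_eq_square algebra_simps)
    finally show "(F \<circ> (\<lambda>(a,b). (a+b+1, b-a))) (a,b) = - (q a * q b)" .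
  qed
  also have "infsum (\<lambda>(a,b). p a * p b) UNIV = infsum p UNIV ^ 2"
    unfolding power2_eq_square by (rule prod_infsum(2)) (simp_all add: p_def sp)
  also have "infsum (\<lambda>(a,b). - (q a * q b)) UNIV = - (infsum q UNIV ^ 2)"
  proof -
    have "infsum (\<lambda>(a,b). - (q a * q b)) UNIV = infsum (\<lambda>x. - (case x of (a,b) \<Rightarrow> q a * q b)) UNIV"
      by (rule infsum_cong) auto
    also have "\<dots> = - infsum (\<lambda>(a,b). q a * q b) UNIV" by (rule infsum_uminus)
    also have "infsum (\<lambda>(a,b). q a * q b) UNIV = infsum q UNIV ^ 2"
      unfolding power2_eq_square by (rule prod_infsum(2)) (simp_all add: q_def sq)
    finally show ?thesis .
  qed
  finally show ?thesis unfolding p_def q_def by simp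
qed

lemma th2sq: "theta2 z ^ 2 = 2 * (\<Sum>\<^sub>\<infinity>m::int. ee z (2 * (of_int m)^2)) * (\<Sum>\<^sub>\<infinity>m::int. ee z (2 * (of_int m + 1/2)^2))"
proof -
  define t where "t = (\<lambda>m::int. ee z ((of_int m + 1/2)^2))"
  define p where "p = (\<lambda>m::int. ee z (2 * (of_int m)^2))"
  define q where "q = (\<lambda>m::int. ee z (2 * (of_int m + 1/2)^2))"
  define F where "F = (\<lambda>(m,n). t m * t n)"
  have st: "t summable_on UNIV" unfolding t_def by (rule s2)
  have F: "F summable_on UNIV" unfolding F_def by (rule prod_infsum(1)[OF st st])
  have "theta2 z ^ 2 = infsum F UNIV"
    unfolding T2 F_def t_def[symmetric] power2_eq_square[of "infsum t UNIV"] by (rule prod_infsum(2)[OF st st, symmetric])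
  also have "\<dots> = infsum (F \<circ> (\<lambda>(a,b). (a+b, a-b))) UNIV + infsum (F \<circ> (\<lambda>(a,b). (a+b, b-a-1))) UNIV"
    by (rule split2[OF F g1_facts(1) g1_facts(3) g1_facts(5) g1_facts(7)])
  also have "F \<circ> (\<lambda>(a,b). (a+b, a-b)) = (\<lambda>(a,b). q a * p b)"
  proof (rule ext, clarify)
    fix a b :: int
    show "(F \<circ> (\<lambda>(a,b). (a+b, a-b))) (a,b) = q a * p b"
      unfolding F_def t_def p_def q_def o_def split
      by (rule ee_pair) (simp add: power2_eq_square algebra_simps)
  qed
  also have "F \<circ> (\<lambda>(a,b). (a+b, b-a-1)) = (\<lambda>(a,b). q a * p b)"
  proof (rule ext, clarify)
    fix a b :: int
    show "(F \<circ> (\<lambda>(a,b). (a+b, b-a-1))) (a,b) = q a * p b"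
      unfolding F_def t_def p_def q_def o_def split
      by (rule ee_pair) (simp add: power2_eq_square algebra_simps)
  qed
  also have "infsum (\<lambda>(a,b). q a * p b) UNIV = infsum q UNIV * infsum p UNIV"
    by (rule prod_infsum(2)) (simp_all add: p_def q_def sp sq)
  finally show ?thesis unfolding p_def q_def by (simp add: algebra_simps)
qed

lemma jacobi: "theta3 z ^ 4 = theta2 z ^ 4 + theta4 z ^ 4"
proof -
  have a: "theta3 z ^ 4 = (theta3 z ^ 2)^2" "theta2 z ^ 4 = (theta2 z ^ 2)^2" "theta4 z ^ 4 = (theta4 z ^ 2)^2"
    by simp_all
  show ?thesis unfolding a th2sq th3sq th4sq by (simp add: power2_eq_square algebra_simps)
qed

end




definition kk :: "nat \<Rightarrow> nat \<Rightarrow> nat" where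
  "kk n i = 2 * ((n - i) choose (2*i)) + (if i = 0 then 0 else (n - i - 1) choose (2*i - 1))"

lemma pas: "int ((a+2) choose (b+2)) = 2 * int ((a+1) choose (b+2)) - int (a choose (b+2)) + int (a choose b)"
proof -
  have "(a+2) choose (b+2) = ((a+1) choose (b+2)) + ((a+1) choose (b+1))"
    using binomial_Suc_Suc[of "a+1" "b+1"] by simp
  moreover have "(a+1) choose (b+2) = (a choose (b+2)) + (a choose (b+1))"
    using binomial_Suc_Suc[of a "b+1"] by simp
  moreover have "(a+1) choose (b+1) = (a choose (b+1)) + (a choose b)"
    using binomial_Suc_Suc[of a b] by simp
  ultimately show ?thesis by simp
qed

lemma kk_zero: assumes "1 \<le> i" "n < 3*i" shows "kk n i = 0"
proof -
  have "n - i < 2*i" "n - i - 1 < 2*i - 1" using assms by arith+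
  then show ?thesis unfolding kk_def by (simp add: binomial_eq_0)
qed

lemma recB: assumes "1 \<le> m" "1 \<le> i"
  shows "int ((m+3-i) choose (2*i)) = 2 * int ((m+2-i) choose (2*i)) - int ((m+1-i) choose (2*i)) + int ((m-(i-1)) choose (2*(i-1)))"
proof -
  obtain j where j: "i = Suc j" using assms(2) by (cases i) auto
  show ?thesis
  proof (cases "j \<le> m")
    case True
    then obtain a where a: "m = j + a" using le_Suc_ex by blast
    show ?thesis using pas[of a "2*j"] unfolding j a by (simp add: algebra_simps)
  next
    case False
    then show ?thesis unfolding j using assms(1) by (simp add: binomial_eq_0)
  qed
qed

lemma recBp: assumes "1 \<le> m" "1 \<le> i"
  shows "int ((m+3-i-1) choose (2*i-1)) = 2 * int ((m+2-i-1) choose (2*i-1)) - int ((m+1-i-1) choose (2*i-1))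
     + (if i - 1 = 0 then 0 else int ((m-(i-1)-1) choose (2*(i-1)-1)))"
proof -
  obtain j where j: "i = Suc j" using assms(2) by (cases i) auto
  show ?thesis
  proof (cases "j = 0")
    case True
    obtain m' where m': "m = Suc m'" using assms(1) by (cases m) auto
    show ?thesis unfolding j True m' by simp
  next
    case False
    then obtain l where l: "j = Suc l" by (cases j) auto
    show ?thesis
    proof (cases "j + 1 \<le> m")
      case True
      then obtain a where a: "m = j + 1 + a" using le_Suc_ex by blast
      show ?thesis using pas[of a "2*l+1"] unfolding j a l by (simp add: algebra_simps)
    next
      case False
      then show ?thesis unfolding j l using assms(1) by (simp add: binomial_eq_0)
    qed
  qed
qed

lemma kk_rec: assumes "1 \<le> m"
  shows "int (kk (m+3) i) = 2 * int (kk (m+2) i) - int (kk (m+1) i) + (if i = 0 then 0 else int (kk m (i-1)))"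
proof (cases "i = 0")
  case True then show ?thesis by (simp add: kk_def)
next
  case False
  then have i: "1 \<le> i" by simp
  have "int (kk n i) = 2 * int ((n-i) choose (2*i)) + int ((n-i-1) choose (2*i-1))" for n
    using False by (simp add: kk_def)
  moreover have "int (kk m (i-1)) = 2 * int ((m-(i-1)) choose (2*(i-1))) + (if i - 1 = 0 then 0 else int ((m-(i-1)-1) choose (2*(i-1)-1)))"
    by (simp add: kk_def)
  ultimately show ?thesis using recB[OF assms i] recBp[OF assms i] False
    by (simp add: algebra_simps)
qed


definition TT :: "complex \<Rightarrow> complex \<Rightarrow> nat \<Rightarrow> nat \<Rightarrow> complex" where
  "TT E D n i = of_nat (kk n i) * D^i * E^(n - 3*i)"

definition SS :: "complex \<Rightarrow> complex \<Rightarrow> nat \<Rightarrow> complex" where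
  "SS E D n = (\<Sum>i\<le>n. TT E D n i)"

lemma TT_zero: "1 \<le> i \<Longrightarrow> n < 3*i \<Longrightarrow> TT E D n i = 0"
  by (simp add: TT_def kk_zero)

lemma SS_ext: assumes "n \<le> K" shows "(\<Sum>i\<le>K. TT E D n i) = SS E D n"
  unfolding SS_def by (rule sum.mono_neutral_right) (use assms in \<open>auto intro!: TT_zero\<close>)

lemma kk_rec_c: assumes "1 \<le> m"
  shows "(of_nat (kk (m+3) i) :: complex) = 2 * of_nat (kk (m+2) i) - of_nat (kk (m+1) i) + (if i = 0 then 0 else of_nat (kk m (i-1)))"
proof -
  have "(of_int (int (kk (m+3) i)) :: complex) = of_int (2 * int (kk (m+2) i) - int (kk (m+1) i) + (if i = 0 then 0 else int (kk m (i-1))))"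
    using kk_rec[OF assms, of i] by simp
  then show ?thesis by (simp split: if_splits)
qed

lemma TT_rec: assumes m: "1 \<le> m"
  shows "TT E D (m+3) i = 2 * E * TT E D (m+2) i - E^2 * TT E D (m+1) i + (if i = 0 then 0 else D * TT E D m (i-1))"
proof -
  have K: "of_nat (kk (m+3) i) = 2 * of_nat (kk (m+2) i) - of_nat (kk (m+1) i) + (if i = 0 then 0 else (of_nat (kk m (i-1)) :: complex))"
    by (rule kk_rec_c[OF m])
  show ?thesis
  proof (cases "3*i \<le> m+1")
    case True
    then obtain r where r: "m + 1 = 3*i + r" using le_Suc_ex by blast
    have e1: "m + 3 - 3*i = r + 2" "m + 2 - 3*i = r + 1" "m + 1 - 3*i = r" using r by auto
    show ?thesis
    proof (cases "i = 0")
      case True then show ?thesis by (simp add: TT_def kk_def power_add power2_eq_square power3_eq_cube algebra_simps)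
    next
      case False
      have e2: "m - 3*(i-1) = r + 2" using r False by auto
      have Di: "D^i = D * D^(i-1)" using False by (metis power_eq_if)
      show ?thesis using False unfolding TT_def e1 e2 Di K by (simp add: algebra_simps power2_eq_square)
    qed
  next
    case False
    then have i: "1 \<le> i" by auto
    have Di: "D^i = D * D^(i-1)" using i by (metis One_nat_def Suc_le_eq power_eq_if not_gr0 not_one_le_zero)
    have z1: "kk (m+1) i = 0" using False by (intro kk_zero i) auto
    show ?thesis
    proof (cases "3*i \<le> m+2")
      case True
      have e: "m + 3 - 3*i = 1" "m + 2 - 3*i = 0" "m - 3*(i-1) = 1" using True False by auto
      show ?thesis using i unfolding TT_def e Di K z1 by (simp add: algebra_simps)
    next
      case False2: False
      have z2: "kk (m+2) i = 0" using False2 by (intro kk_zero i) auto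
      show ?thesis
      proof (cases "3*i \<le> m+3")
        case True
        have e: "m + 3 - 3*i = 0" "m - 3*(i-1) = 0" using True False2 by auto
        show ?thesis using i unfolding TT_def e Di K z1 z2 by (simp add: algebra_simps)
      next
        case False3: False
        have z3: "kk (m+3) i = 0" using False3 by (intro kk_zero i) auto
        have z4: "kk m (i-1) = 0" using False3 m by (intro kk_zero) auto
        show ?thesis unfolding TT_def z1 z2 z3 z4 by simp
      qed
    qed
  qed
qed

lemma SS_rec: assumes m: "1 \<le> m"
  shows "SS E D (m+3) = 2 * E * SS E D (m+2) - E^2 * SS E D (m+1) + D * SS E D m"
proof -
  have "SS E D (m+3) = (\<Sum>i\<le>m+3. 2 * E * TT E D (m+2) i - E^2 * TT E D (m+1) i + (if i = 0 then 0 else D * TT E D m (i-1)))"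
    unfolding SS_def using TT_rec[OF m] by simp
  also have "\<dots> = 2 * E * (\<Sum>i\<le>m+3. TT E D (m+2) i) - E^2 * (\<Sum>i\<le>m+3. TT E D (m+1) i) + (\<Sum>i\<le>m+3. (if i = 0 then 0 else D * TT E D m (i-1)))"
    by (simp add: sum.distrib sum_subtractf sum_distrib_left)
  also have "(\<Sum>i\<le>m+3. TT E D (m+2) i) = SS E D (m+2)" by (rule SS_ext) simp
  also have "(\<Sum>i\<le>m+3. TT E D (m+1) i) = SS E D (m+1)" by (rule SS_ext) simp
  also have "(\<Sum>i\<le>m+3. (if i = 0 then 0 else D * TT E D m (i-1))) = (\<Sum>i\<le>m+2. D * TT E D m i)"
  proof -
    have "(\<Sum>i\<le>Suc (m+2). (if i = 0 then 0 else D * TT E D m (i-1))) = (\<Sum>i\<le>m+2. D * TT E D m i)"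
      using sum.atMost_Suc_shift[of "\<lambda>i. (if i = 0 then 0 else D * TT E D m (i-1))" "m+2"] by simp
    moreover have eq3: "m + 3 = Suc (m + 2)" by simp
    ultimately show ?thesis unfolding eq3 by (simp only:)
  qed
  also have "\<dots> = D * SS E D m"
  proof -
    have "(\<Sum>i\<le>m+2. TT E D m i) = SS E D m" by (rule SS_ext) simp
    then show ?thesis by (simp only: sum_distrib_left[symmetric])
  qed
  finally show ?thesis .
qed

lemma SS_1: "SS E D 1 = 2 * E"
  by (simp add: SS_def TT_def kk_def)
lemma SS_2: "SS E D 2 = 2 * E^2"
  by (simp add: SS_def TT_def kk_def eval_nat_numeral)
lemma SS_3: "SS E D 3 = 2 * E^3 + 3 * D"
  by (simp add: SS_def TT_def kk_def eval_nat_numeral)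

lemma power_sums:
  fixes a b c E D :: complex
  assumes e1: "a + b + c = 2 * E" and e2: "a*b + b*c + c*a = E^2" and e3: "a*b*c = D" and n: "1 \<le> n"
  shows "a^n + b^n + c^n = SS E D n"
  using n
proof (induction n rule: less_induct)
  case (less n)
  have rec: "x^(m+3) = (a+b+c) * x^(m+2) - (a*b+b*c+c*a) * x^(m+1) + a*b*c * x^m"
    if "x = a \<or> x = b \<or> x = c" for x :: complex and m
  proof -
    have "x^(m+3) - ((a+b+c) * x^(m+2) - (a*b+b*c+c*a) * x^(m+1) + a*b*c * x^m) = x^m * ((x-a)*(x-b)*(x-c))"
      by (simp add: power_add power2_eq_square power3_eq_cube algebra_simps)
    also have "\<dots> = 0" using that by auto
    finally show ?thesis by simp
  qed
  show ?case
  proof (cases "n \<le> 3")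
    case True
    then have "n = 1 \<or> n = 2 \<or> n = 3" using less.prems by auto
    moreover have "a^1 + b^1 + c^1 = 2 * E" using e1 by simp
    moreover have "a^2 + b^2 + c^2 = 2 * E^2"
    proof -
      have "a^2 + b^2 + c^2 = (a+b+c)^2 - 2*(a*b+b*c+c*a)" by (simp add: power2_eq_square algebra_simps)
      then show ?thesis unfolding e1 e2 by (simp add: power2_eq_square)
    qed
    moreover have "a^3 + b^3 + c^3 = 2 * E^3 + 3 * D"
    proof -
      have "a^3 + b^3 + c^3 = (a+b+c)^3 - 3*(a+b+c)*(a*b+b*c+c*a) + 3*(a*b*c)"
        by (simp add: power2_eq_square power3_eq_cube algebra_simps)
      then show ?thesis unfolding e1 e2 e3 by (simp add: power2_eq_square power3_eq_cube)
    qed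
    ultimately show ?thesis using SS_1 SS_2 SS_3 by auto
  next
    case False
    then obtain m where m: "n = m + 3" "1 \<le> m" using False by (intro that[of "n-3"]) auto
    have IH: "a^k + b^k + c^k = SS E D k" if "k < n" "1 \<le> k" for k using less.IH that by blast
    have "a^n + b^n + c^n = (a+b+c) * (a^(m+2) + b^(m+2) + c^(m+2)) - (a*b+b*c+c*a) * (a^(m+1) + b^(m+1) + c^(m+1)) + a*b*c * (a^m + b^m + c^m)"
      unfolding m(1) using rec[of a m] rec[of b m] rec[of c m] by (simp add: algebra_simps)
    also have "\<dots> = SS E D n"
      unfolding e1 e2 e3 m(1) SS_rec[OF m(2)] using IH[of m] IH[of "m+1"] IH[of "m+2"] m by simp
    finally show ?thesis .
  qed
qed



lemma kk_mult: assumes "1 \<le> i" shows "i * kk n i = n * ((n - i - 1) choose (2*i - 1))"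
proof -
  have t: "(2*i) * ((n-i) choose (2*i)) = (n-i) * ((n - i - 1) choose (2*i - 1))"
    using times_binomial_minus1_eq[of "2*i" "n-i"] assms by simp
  have "i * kk n i = (2*i) * ((n-i) choose (2*i)) + i * ((n - i - 1) choose (2*i - 1))"
    using assms by (simp add: kk_def algebra_simps)
  also have "\<dots> = ((n-i) + i) * ((n - i - 1) choose (2*i - 1))" unfolding t by (simp add: algebra_simps)
  also have "\<dots> = n * ((n - i - 1) choose (2*i - 1))"
  proof (cases "i \<le> n")
    case True then show ?thesis by simp
  next
    case False
    then have "n - i - 1 < 2*i - 1" using assms by arith
    then show ?thesis by (simp add: binomial_eq_0)
  qed
  finally show ?thesis .
qed

lemma kk_coeff: assumes "1 \<le> i"
  shows "(of_nat (kk n i) :: complex) = of_nat n / of_nat i * of_nat ((n - i - 1) choose (2*i - 1))"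
proof -
  have "(of_nat i :: complex) * of_nat (kk n i) = of_nat n * of_nat ((n - i - 1) choose (2*i - 1))"
    using kk_mult[OF assms, of n] by (metis of_nat_mult)
  moreover have "(of_nat i :: complex) \<noteq> 0" using assms by simp
  ultimately show ?thesis by (simp add: field_simps)
qed

lemma SS_explicit:
  fixes E \<Delta> :: complex and n :: nat
  shows "SS E (2^8 * \<Delta>) n = 2 * E ^ n +
    (\<Sum>i = 1..n div 3. (of_nat n / of_nat i) * of_nat ((n - i - 1) choose (2*i - 1))
       * 2 ^ (8*i) * \<Delta> ^ i * E ^ (n - 3*i))"
proof -
  have "SS E (2^8 * \<Delta>) n = TT E (2^8 * \<Delta>) n 0 + (\<Sum>i = 1..n. TT E (2^8 * \<Delta>) n i)"
    unfolding SS_def atMost_atLeast0 by (simp add: sum.atLeast_Suc_atMost)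
  also have "TT E (2^8 * \<Delta>) n 0 = 2 * E ^ n" by (simp add: TT_def kk_def)
  also have "(\<Sum>i = 1..n. TT E (2^8 * \<Delta>) n i) = (\<Sum>i = 1..n div 3. TT E (2^8 * \<Delta>) n i)"
    by (rule sum.mono_neutral_right) (auto intro!: TT_zero)
  also have "\<dots> = (\<Sum>i = 1..n div 3. (of_nat n / of_nat i) * of_nat ((n - i - 1) choose (2*i - 1))
       * 2 ^ (8*i) * \<Delta> ^ i * E ^ (n - 3*i))"
  proof (rule sum.cong)
    fix i assume "i \<in> {1..n div 3}"
    then have i: "1 \<le> i" by simp
    show "TT E (2^8 * \<Delta>) n i = (of_nat n / of_nat i) * of_nat ((n - i - 1) choose (2*i - 1))
       * 2 ^ (8*i) * \<Delta> ^ i * E ^ (n - 3*i)"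
      unfolding TT_def kk_coeff[OF i] by (simp add: power_mult_distrib power_mult)
  qed simp
  finally show ?thesis .
qed

theorem theorem2p2:
  fixes z :: complex and n :: nat
  assumes "Im z > 0" and "n \<ge> 1"
  shows "h n z = 2 * E4 z ^ n +
    (\<Sum>i = 1..n div 3. (of_nat n / of_nat i) * of_nat ((n - i - 1) choose (2*i - 1))
       * 2 ^ (8*i) * Delta24 z ^ i * E4 z ^ (n - 3*i))"
proof -
  define x where "x = theta2 z ^ 4"
  define y where "y = theta4 z ^ 4"
  have J: "theta3 z ^ 4 = x + y" unfolding x_def y_def by (rule jacobi[OF assms(1)])
  have a8: "theta2 z ^ 8 = x^2" unfolding x_def by (simp flip: power_mult)
  have b8: "theta3 z ^ 8 = (x+y)^2" unfolding J[symmetric] by (simp flip: power_mult)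
  have c8: "theta4 z ^ 8 = y^2" unfolding y_def by (simp flip: power_mult)
  have e1: "theta2 z ^ 8 + theta3 z ^ 8 + theta4 z ^ 8 = 2 * E4 z" by (simp add: E4_def)
  have e2: "theta2 z ^ 8 * theta3 z ^ 8 + theta3 z ^ 8 * theta4 z ^ 8 + theta4 z ^ 8 * theta2 z ^ 8 = E4 z ^ 2"
    unfolding E4_def a8 b8 c8 by (simp add: power2_eq_square field_simps)
  have e3: "theta2 z ^ 8 * theta3 z ^ 8 * theta4 z ^ 8 = 2^8 * Delta24 z"
    by (simp add: Delta24_def power_mult_distrib power_divide)
  have "h n z = (theta2 z ^ 8) ^ n + (theta3 z ^ 8) ^ n + (theta4 z ^ 8) ^ n"
    by (simp add: h_def power_mult)
  also have "\<dots> = SS (E4 z) (2^8 * Delta24 z) n"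
    by (rule power_sums[OF e1 e2 e3 assms(2)])
  finally show ?thesis by (simp only: SS_explicit)
qed

end
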